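(* (i) Let $p, m, r \in \mathbb N$. Then \begin{align*} S(p,m,1,r,0) &=\sum_{i=2}^{m}\frac{(-1)^{m-i}}{r^{m-i+1}}S_{p,i}^{+,+}+\frac{(-1)^{m-1}}{r^{m}}\zeta(p+1)\\ &\quad +\frac{(-1)^{m-1}}{r^{m}}\left(\sum_{j=1}^{r-1}\frac{(-1)^{p+1}H_j}{j^p} +\sum_{\ell=2}^{p}(-1)^{p-\ell}H_{r-1}^{(p-\ell+1)}\zeta(\ell)\right)\,. \end{align*} (ii) Let $m, r \in \mathbb N$, $p \in \mathbb N_{0}$ with $m \geq p+2$. Then \begin{align*} S(-p,m,1,r,0) =\frac{1}{p+1}\sum_{\ell=0}^{p} \binom{p+1}{\ell}B_{\ell}^{+} \left(\sum_{i=2}^{m-p-1+\ell}\frac{(-1)^{m-p-1+\ell-i}}{r^{m-p+\ell-i}}\zeta(i) +\frac{(-1)^{m-p-2+\ell}}{r^{m-p-1+\ell}} H_{r}\right)\,. \end{align*}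
   Context: $H_n^{(q)}=\sum_{j=1}^n j^{-q}$ for $q\in\mathbb N$, $H_n=H_n^{(1)}$, $H_0^{(q)}=0$; for an integer $q\ge0$, $H_n^{(-q)}=\sum_{\ell=1}^n\ell^q$. For $q\in\mathbb Z$ and $m,t,r\in\mathbb N$, $S(q,m,t,r,0):=\sum_{n=1}^\infty\frac{H_n^{(q)}}{n^{m}(n+r)^{t}}$. $S_{p,q}^{+,+}:=\sum_{n=1}^\infty H_n^{(p)}/n^q$. $\zeta$ is the Riemann zeta function. Bernoulli numbers $B_j^{+}$: $\frac{x}{1-e^{-x}}=\sum_{j\ge0}B_j^{+}\frac{x^j}{j!}$. Empty sums are $0$. *)

theory Defs
  imports "HOL-Analysis.Analysis" "HOL-Computational_Algebra.Formal_Power_Series"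
begin

text \<open>Generalized harmonic numbers H_n^(q) for q an integer:
  for q >= 1 this is sum_{j=1}^n j^(-q); for q = -q' <= 0 it is sum_{l=1}^n l^q'.
  Both cases are the single formula sum_{j=1}^n j powi (-q).\<close>
definition gharm :: "int \<Rightarrow> nat \<Rightarrow> real" where
  "gharm q n = (\<Sum>j=1..n. (real j) powi (- q))"

text \<open>S(q,m,t,r,0) = sum_{n>=1} H_n^(q) / (n^m (n+r)^t).\<close>
definition S_sum :: "int \<Rightarrow> nat \<Rightarrow> nat \<Rightarrow> nat \<Rightarrow> real" where
  "S_sum q m t r = (\<Sum>n. gharm q (Suc n) / (real (Suc n) ^ m * real (Suc n + r) ^ t))"

definition S_pp :: "nat \<Rightarrow> nat \<Rightarrow> real" where
  "S_pp p q = (\<Sum>n. gharm (int p) (Suc n) / real (Suc n) ^ q)"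

text \<open>Riemann zeta at integer arguments (used only for s >= 2).\<close>
definition zeta_nat :: "nat \<Rightarrow> real" where
  "zeta_nat s = (\<Sum>n. 1 / real (Suc n) ^ s)"

definition bernoulli_plus :: "nat \<Rightarrow> real" where
  "bernoulli_plus j = fact j * fps_nth (fps_X / (1 - fps_exp (-1))) j"

end

theory Submission imports Defs "HOL-Real_Asymp.Real_Asymp" begin

lemma faulhaber_fps:
  fixes n :: nat
  defines "g \<equiv> (1 - fps_exp (-1::real))"
  shows "(\<Sum>l=1..n. fps_exp (real l)) = (fps_X / g) * Abs_fps (\<lambda>k. real n ^ (k+1) / fact (k+1))"
proof -
  have g0: "g \<noteq> 0"
  proof
    assume "g = 0" hence "fps_nth g 1 = 0" by simp
    thus False by (simp add: g_def)
  qed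
  have sd: "subdegree g = 1"
    by (rule subdegreeI) (auto simp: g_def)
  have Bg: "(fps_X / g) * g = fps_X"
    by (rule fps_times_divide_eq) (use g0 sd in auto)
  have Ag: "(\<Sum>l=1..n. fps_exp (real l)) * g = fps_exp (real n) - 1" for n
  proof (induction n)
    case 0 then show ?case by simp
  next
    case (Suc n)
    have e: "fps_exp (real (Suc n)) * fps_exp (-1) = fps_exp (real n)"
      by (simp flip: fps_exp_add_mult)
    have e': "fps_exp (-1) * fps_exp (1 + real n) = fps_exp (real n)"
      using e by (simp add: mult.commute add.commute)
    show ?case using Suc
      by (simp add: distrib_right g_def algebra_simps e')
  qed
  have XG: "fps_X * Abs_fps (\<lambda>k. real n ^ (k+1) / fact (k+1)) = fps_exp (real n) - 1"
  proof (rule fps_ext)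
    fix k show "fps_nth (fps_X * Abs_fps (\<lambda>k. real n ^ (k+1) / fact (k+1))) k = fps_nth (fps_exp (real n) - 1) k"
      by (cases k) (simp_all add: fps_X_mult_nth algebra_simps)
  qed
  define A where "A = (\<Sum>l=1..n. fps_exp (real l))"
  define G where "G = Abs_fps (\<lambda>k. real n ^ (k+1) / fact (k+1))"
  define B where "B = fps_X / g"
  have "(A - B * G) * g = A * g - G * (B * g)" by (simp add: algebra_simps)
  also have "\<dots> = 0" using Ag[of n] XG Bg unfolding A_def B_def G_def by (simp add: mult.commute)
  finally have "A = B * G" using g0 by simp
  hence "(\<Sum>l=1..n. fps_exp (real l)) = (fps_X / g) * Abs_fps (\<lambda>k. real n ^ (k+1) / fact (k+1))"
    unfolding A_def B_def G_def .
  thus ?thesis using g0 by simp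
qed

lemma faulhaber:
  "(\<Sum>j=1..n. real j ^ p) = 1 / real (p + 1) * (\<Sum>l=0..p. real ((p + 1) choose l) * bernoulli_plus l * real n ^ (p + 1 - l))"
proof -
  have "fps_nth (\<Sum>l=1..n. fps_exp (real l)) p = fps_nth ((fps_X / (1 - fps_exp (-1::real))) * Abs_fps (\<lambda>k. real n ^ (k+1) / fact (k+1))) p"
    by (simp only: faulhaber_fps)
  hence "(\<Sum>l=1..n. real l ^ p / fact p) = (\<Sum>i=0..p. bernoulli_plus i / fact i * (real n ^ (p - i + 1) / fact (p - i + 1)))"
    by (simp add: fps_sum_nth fps_mult_nth bernoulli_plus_def)
  hence "(\<Sum>l=1..n. real l ^ p) = fact p * (\<Sum>i=0..p. bernoulli_plus i / fact i * (real n ^ (p - i + 1) / fact (p - i + 1)))"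
    by (simp add: sum_divide_distrib[symmetric] field_simps)
  also have "\<dots> = 1 / real (p + 1) * (\<Sum>l=0..p. real ((p + 1) choose l) * bernoulli_plus l * real n ^ (p + 1 - l))"
    unfolding sum_distrib_left
  proof (rule sum.cong)
    fix i assume i: "i \<in> {0..p}"
    then obtain q where q: "p = i + q" by (metis atLeastAtMost_iff le_Suc_ex)
    have C: "real ((p+1) choose i) = fact (p+1) / (fact i * fact (p+1-i))"
      using i by (intro binomial_fact) auto
    have e1: "p + 1 - i = q + 1" "p - i + 1 = q + 1" using q by auto
    have F: "(fact (p+1)::real) = real (p+1) * fact p" by simp
    have gen: "F * (b / A * (x / B)) = 1 / N * ((N * F) / (A * B) * b * x)"
      if "A > 0" "B > 0" "N > 0" for A B N F b x :: real
      using that by (simp add: field_simps)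
    show "fact p * (bernoulli_plus i / fact i * (real n ^ (p - i + 1) / fact (p - i + 1))) =
          1 / real (p + 1) * (real ((p + 1) choose i) * bernoulli_plus i * real n ^ (p + 1 - i))"
      unfolding C e1 F by (rule gen) auto
  qed simp
  finally show ?thesis .
qed
lemma gharm_neg: "gharm (- int p) n = (\<Sum>j=1..n. real j ^ p)"
  by (simp add: gharm_def power_int_of_nat)
lemma gharm_pos: "gharm (int p) n = (\<Sum>j=1..n. 1 / real j ^ p)"
  by (simp add: gharm_def power_int_minus divide_inverse power_int_of_nat)

lemma pf_sum_Suc:
  fixes x r :: real
  assumes "k \<ge> 1"
  shows "(\<Sum>i=2..Suc k. (-1)^(Suc k-i) / r^(Suc k-i+1) * (1/x^i)) =
     (-1)^(k-1)/r^k * (1/x^2) + (1/x) * (\<Sum>i=2..k. (-1)^(k-i) / r^(k-i+1) * (1/x^i))"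
proof -
  have "(\<Sum>i=2..Suc k. (-1)^(Suc k-i) / r^(Suc k-i+1) * (1/x^i)) =
     (-1)^(Suc k-2) / r^(Suc k-2+1) * (1/x^2) + (\<Sum>i=Suc 2..Suc k. (-1)^(Suc k-i) / r^(Suc k-i+1) * (1/x^i))"
    using assms by (subst sum.atLeast_Suc_atMost) auto
  also have "(\<Sum>i=Suc 2..Suc k. (-1)^(Suc k-i) / r^(Suc k-i+1) * (1/x^i)) =
     (\<Sum>i=2..k. (-1)^(Suc k-Suc i) / r^(Suc k-Suc i+1) * (1/x^(Suc i)))"
    by (rule sum.shift_bounds_cl_Suc_ivl)
  also have "\<dots> = (1/x) * (\<Sum>i=2..k. (-1)^(k-i) / r^(k-i+1) * (1/x^i))"
    by (auto simp: sum_distrib_left mult_ac intro!: sum.cong)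
  finally have e: "(\<Sum>i=2..Suc k. (-1)^(Suc k-i) / r^(Suc k-i+1) * (1/x^i)) =
     (-1)^(Suc k-2) / r^(Suc k-2+1) * (1/x^2) + (1/x) * (\<Sum>i=2..k. (-1)^(k-i) / r^(k-i+1) * (1/x^i))" .
  have "(Suc k-2) = k - 1" "Suc k - 2 + 1 = k" using assms by auto
  with e show ?thesis by simp
qed

lemma pf_aux: "(1/x)*(S + C*(1/x - 1/y)) = (1/x)*S + C*(1/x^2) - C*(1/(x*y))" for x y S C :: real
  by (simp add: divide_inverse inverse_mult_distrib power2_eq_square algebra_simps)

lemma pf_aux2: "(A::real) + C*B - C*(R*D) = (C*B + A) + -(C*R)*D"
  by (simp add: algebra_simps)

lemma pf:
  fixes x r :: real
  assumes x: "x > 0" and r: "r > 0" and k: "k \<ge> 1"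
  shows "1/(x^k*(x+r)) = (\<Sum>i=2..k. (-1)^(k-i) / r^(k-i+1) * (1/x^i)) + (-1)^(k-1)/r^k * (1/x - 1/(x+r))"
  using k
proof (induction k rule: dec_induct)
  case base
  then show ?case using x r by (simp add: field_simps)
next
  case (step k)
  have "r*x + x*x > 0" "x + r > 0" using x r by (auto simp: add_pos_pos)
  have sg: "(-1::real)^(Suc k - 1) / r^Suc k = - ((-1)^(k-1)/r^k * (1/r))"
    using step.hyps(1) by (cases k) simp_all
  have b: "1/(x*(x+r)) = 1/r * (1/x - 1/(x+r))" using x r by (simp add: field_simps)
  have "1/(x^Suc k*(x+r)) = (1/x) * (1/(x^k*(x+r)))" by simp
  also have "\<dots> = (1/x) * (\<Sum>i=2..k. (-1)^(k-i) / r^(k-i+1) * (1/x^i)) + (-1)^(k-1)/r^k * (1/x^2) - (-1)^(k-1)/r^k * (1/(x*(x+r)))"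
    unfolding step.IH by (rule pf_aux)
  also have "\<dots> = (\<Sum>i=2..Suc k. (-1)^(Suc k-i) / r^(Suc k-i+1) * (1/x^i)) + (-1)^(Suc k-1)/r^Suc k * (1/x - 1/(x+r))"
    unfolding pf_sum_Suc[OF step.hyps(1)] b sg by (rule pf_aux2)
  finally show ?case .
qed

lemma series_pf:
  fixes a :: "nat \<Rightarrow> real" and k r :: nat
  assumes k: "k \<ge> 1" and r: "r \<ge> 1"
  and sa: "\<And>i. 2 \<le> i \<Longrightarrow> i \<le> k \<Longrightarrow> summable (\<lambda>n. a n / real (Suc n) ^ i)"
  and sb: "summable (\<lambda>n. a n * (1 / real (Suc n) - 1 / real (Suc n + r)))"
  shows "(\<lambda>n. a n / (real (Suc n) ^ k * real (Suc n + r))) sums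
    ((\<Sum>i=2..k. (-1)^(k-i) / real r^(k-i+1) * suminf (\<lambda>n. a n / real (Suc n) ^ i))
     + (-1)^(k-1)/real r^k * suminf (\<lambda>n. a n * (1 / real (Suc n) - 1 / real (Suc n + r))))"
proof -
  have eq: "a n / (real (Suc n) ^ k * real (Suc n + r)) =
     (\<Sum>i=2..k. (-1)^(k-i) / real r^(k-i+1) * (a n / real (Suc n) ^ i))
     + (-1)^(k-1)/real r^k * (a n * (1 / real (Suc n) - 1 / real (Suc n + r)))" for n
  proof -
    have "a n / (real (Suc n) ^ k * real (Suc n + r)) = a n * (1 / (real (Suc n) ^ k * (real (Suc n) + real r)))"
      by simp
    also have "\<dots> = a n * ((\<Sum>i=2..k. (-1)^(k-i) / real r^(k-i+1) * (1/real (Suc n)^i)) + (-1)^(k-1)/real r^k * (1/real (Suc n) - 1/(real (Suc n)+real r)))"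
      using r k by (subst pf) auto
    also have "\<dots> = (\<Sum>i=2..k. (-1)^(k-i) / real r^(k-i+1) * (a n / real (Suc n) ^ i))
     + (-1)^(k-1)/real r^k * (a n * (1 / real (Suc n) - 1 / real (Suc n + r)))"
      by (simp add: distrib_left sum_distrib_left mult_ac)
    finally show ?thesis .
  qed
  show ?thesis unfolding eq
    by (intro sums_add sums_sum sums_mult summable_sums sa sb) auto
qed


lemma zeta_summable: "2 \<le> i \<Longrightarrow> summable (\<lambda>n. 1 / real (Suc n) ^ i)"
proof -
  assume "2 \<le> i"
  hence "summable (\<lambda>n. inverse (real n ^ i))" by (rule inverse_power_summable)
  hence "summable (\<lambda>n. inverse (real (Suc n) ^ i))" by (subst summable_Suc_iff)
  thus ?thesis by (simp add: divide_inverse)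
qed

lemma sid: "(\<Sum>i<r. 1/real (N+1+i)) + 1/real(N+1+r) = 1/real(N+1) + (\<Sum>i<r. 1/real(Suc N+1+i))"
  by (induction r) (simp_all add: algebra_simps)

lemma gharm1: "gharm 1 j = (\<Sum>i<j. 1/real (Suc i))"
  using gharm_pos[of 1 j] sum_bounds_lt_plus1[of "\<lambda>i. 1 / real i" j] by simp

lemma tele: "(\<lambda>n. 1/real (Suc n) - 1/real (Suc n + j)) sums gharm 1 j"
proof -
  define f where "f N = - (\<Sum>i<j. 1/real (N+1+i))" for N
  have "f \<longlonglongrightarrow> - (\<Sum>i<j. 0)"
    unfolding f_def by (intro tendsto_minus tendsto_sum) real_asymp
  hence "(\<lambda>n. f (Suc n) - f n) sums (0 - f 0)" by (intro telescope_sums) simp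
  moreover have "f (Suc n) - f n = 1/real (Suc n) - 1/real (Suc n + j)" for n
    using sid[where r=j and N=n] unfolding f_def by (simp add: algebra_simps)
  moreover have "0 - f 0 = gharm 1 j" unfolding f_def gharm1 by (simp add: add.commute)
  ultimately show ?thesis by simp
qed

lemma seriesB:
  fixes k j :: nat assumes k: "k \<ge> 1" and j: "j \<ge> 1"
  shows "(\<lambda>n. 1/(real (Suc n)^k * real (Suc n + j))) sums
     ((\<Sum>i=2..k. (-1)^(k-i)/real j^(k-i+1) * zeta_nat i) + (-1)^(k-1)/real j^k * gharm 1 j)"
proof -
  have "(\<lambda>n. (\<lambda>_. 1::real) n / (real (Suc n) ^ k * real (Suc n + j))) sums
    ((\<Sum>i=2..k. (-1)^(k-i) / real j^(k-i+1) * suminf (\<lambda>n. (\<lambda>_. 1::real) n / real (Suc n) ^ i))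
     + (-1)^(k-1)/real j^k * suminf (\<lambda>n. (\<lambda>_. 1::real) n * (1 / real (Suc n) - 1 / real (Suc n + j))))"
    using tele[of j] zeta_summable by (intro series_pf k j) (auto simp: sums_iff)
  moreover have "suminf (\<lambda>n. 1 / real (Suc n) - 1 / real (Suc n + j)) = gharm 1 j"
    using tele[of j] by (simp add: sums_iff)
  ultimately show ?thesis by (simp add: zeta_nat_def)
qed

lemma gharm_le_harm: "p \<ge> 1 \<Longrightarrow> gharm (int p) N \<le> harm N"
  unfolding gharm_pos harm_def
proof (rule sum_mono)
  fix j assume "p \<ge> 1" "j \<in> {1..N}"
  hence "real j ^ 1 \<le> real j ^ p" by (intro power_increasing) auto
  with \<open>j \<in> {1..N}\<close> show "1 / real j ^ p \<le> inverse (real j)"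
    by (simp add: divide_inverse le_imp_inverse_le)
qed

lemma gharm_nonneg: "gharm (int p) N \<ge> 0"
  unfolding gharm_pos by (intro sum_nonneg) auto

lemma gen_div: "(x - y) * (1/c) + y/c = x/(c::real)"
  by (simp add: diff_divide_distrib)

lemma harm_over: "(\<lambda>N. harm N / real (Suc N) :: real) \<longlonglongrightarrow> 0"
proof -
  have "(\<lambda>N. (harm N - ln (real N)) * (1 / real (Suc N)) + ln (real N) / real (Suc N) :: real)
     \<longlonglongrightarrow> euler_mascheroni * 0 + 0"
    by (intro tendsto_add tendsto_mult euler_mascheroni_LIMSEQ) real_asymp+
  moreover have "(harm N - ln (real N)) * (1 / real (Suc N)) + ln (real N) / real (Suc N) = harm N / real (Suc N)" for N
    using gen_div[of "harm N" "ln (real N)" "real (Suc N)"] by simp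
  ultimately show ?thesis by simp
qed


lemma t_summable:
  assumes p: "p \<ge> 1"
  shows "summable (\<lambda>k. 1/(real (Suc k)^p * real (Suc k + j)))"
proof (rule summable_comparison_test'[OF zeta_summable[of 2]])
  fix k :: nat
  have "real (Suc k) ^ 1 \<le> real (Suc k) ^ p" using p by (intro power_increasing) auto
  moreover have "real (Suc k) \<le> real (Suc k + j)" by simp
  ultimately have "real (Suc k) ^ 2 \<le> real (Suc k)^p * real (Suc k + j)"
    by (simp add: power2_eq_square mult_mono)
  thus "norm (1/(real (Suc k)^p * real (Suc k + j))) \<le> 1 / real (Suc k) ^ 2"
    by (simp add: frac_le del: of_nat_Suc of_nat_add)
qed simp

lemma key:
  fixes p r :: nat assumes p: "p \<ge> 1" and r: "r \<ge> 1"
  shows "(\<lambda>n. gharm (int p) (Suc n) * (1/real (Suc n) - 1/real (Suc n + r))) sums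
     (\<Sum>j<r. suminf (\<lambda>k. 1/(real (Suc k)^p * real (Suc k + j))))"
proof -
  define h where "h N = gharm (int p) N" for N
  define s where "s N = (\<Sum>i<r. 1/real (N+1+i))" for N
  define t where "t j k = 1/(real (Suc k)^p * real (Suc k + j))" for j k
  define f where "f n = h (Suc n) * (1/real (Suc n) - 1/real (Suc n + r))" for n
  have hS: "h (Suc N) = h N + 1/real (Suc N)^p" for N
    unfolding h_def gharm_pos by simp
  have sS: "s N - s (Suc N) = 1/real (Suc N) - 1/real (Suc N + r)" for N
    using sid[where r=r and N=N] unfolding s_def by (simp add: algebra_simps)
  have tS: "(\<Sum>j<r. t j N) = 1/real (Suc N)^p * s N" for N
    unfolding t_def s_def sum_distrib_left by (intro sum.cong) (simp_all add: field_simps)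
  have ident: "(\<Sum>n<N. f n) = (\<Sum>j<r. \<Sum>k<N. t j k) - h N * s N" for N
  proof (induction N)
    case 0 then show ?case by (simp add: h_def gharm_def)
  next
    case (Suc N)
    have "(\<Sum>n<Suc N. f n) = (\<Sum>j<r. \<Sum>k<N. t j k) - h N * s N + h (Suc N) * (s N - s (Suc N))"
      using Suc unfolding f_def sS by simp
    also have "\<dots> = (\<Sum>j<r. \<Sum>k<N. t j k) + 1/real (Suc N)^p * s N - h (Suc N) * s (Suc N)"
      unfolding hS by (simp add: field_simps)
    also have "\<dots> = (\<Sum>j<r. \<Sum>k<Suc N. t j k) - h (Suc N) * s (Suc N)"
      unfolding tS[symmetric] by (simp add: sum.distrib)
    finally show ?case .
  qed
  have lim0: "(\<lambda>N. h N * s N) \<longlonglongrightarrow> 0"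
  proof (rule Lim_null_comparison)
    show "(\<lambda>N. harm N / real (Suc N) * real r) \<longlonglongrightarrow> 0"
      using tendsto_mult[OF harm_over tendsto_const[of "real r"]] by simp
    show "\<forall>\<^sub>F N in sequentially. norm (h N * s N) \<le> harm N / real (Suc N) * real r"
    proof (intro always_eventually allI)
      fix N
      have h0: "h N \<ge> 0" unfolding h_def by (rule gharm_nonneg)
      have s0: "s N \<ge> 0" unfolding s_def by (intro sum_nonneg) auto
      have hle: "h N \<le> harm N" unfolding h_def using p by (rule gharm_le_harm)
      have "s N \<le> real (card {..<r}) * (1 / real (Suc N))"
        unfolding s_def by (rule sum_bounded_above) (simp add: frac_le)
      hence sle: "s N \<le> real r / real (Suc N)" by simp
      have "h N * s N \<le> harm N * (real r / real (Suc N))"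
        using h0 s0 hle sle by (intro mult_mono) auto
      thus "norm (h N * s N) \<le> harm N / real (Suc N) * real r"
        using h0 s0 by simp
    qed
  qed
  have "(\<lambda>N. (\<Sum>j<r. \<Sum>k<N. t j k) - h N * s N) \<longlonglongrightarrow> (\<Sum>j<r. suminf (t j)) - 0"
    by (intro tendsto_diff tendsto_sum lim0 summable_LIMSEQ) (unfold t_def, rule t_summable[OF p])
  hence "f sums (\<Sum>j<r. suminf (t j))"
    unfolding sums_def ident by simp
  thus ?thesis unfolding f_def h_def t_def .
qed

lemma Hsummable:
  fixes p i :: nat assumes p: "p \<ge> 1" and i: "i \<ge> 2"
  shows "summable (\<lambda>n. gharm (int p) (Suc n) / real (Suc n) ^ i)"
proof (rule summable_comparison_test'[OF summable_mult[OF sums_summable[OF key[OF p order.refl]], of 2]])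
  fix n :: nat
  define x where "x = real (Suc n)"
  have x: "x \<ge> 1" unfolding x_def by simp
  have "x ^ 2 \<le> x ^ i" using x i by (intro power_increasing) auto
  hence "1 / x ^ i \<le> 1 / x^2" using x by (intro divide_left_mono mult_pos_pos) auto
  also have "\<dots> \<le> 2 * (1/x - 1/(x+1))"
  proof -
    have "2 * (1/x - 1/(x+1)) = 2 / (x * (x+1))" using x by (simp add: field_simps)
    moreover have "x * (x+1) \<le> 2 * x^2" using x by (simp add: power2_eq_square algebra_simps)
    moreover have "x * (x+1) > 0" using x by simp
    moreover have "0 < x * ((x + 1) * x^2)" using x by simp
    moreover have "1/x^2 = 2/(2*x^2)" by simp
    ultimately show ?thesis using divide_left_mono[of "x*(x+1)" "2*x^2" 2] by simp
  qed
  finally have le: "1 / x ^ i \<le> 2 * (1/x - 1/(x+1))" .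
  have "gharm (int p) (Suc n) * (1 / x ^ i) \<le> gharm (int p) (Suc n) * (2 * (1/x - 1/(x+1)))"
    by (intro mult_left_mono le gharm_nonneg)
  thus "norm (gharm (int p) (Suc n) / real (Suc n) ^ i) \<le> 2 * (gharm (int p) (Suc n) * (1 / real (Suc n) - 1 / real (Suc n + 1)))"
    using gharm_nonneg[of p "Suc n"] unfolding x_def by (simp add: algebra_simps)
qed


lemma sum_split0: "(r::nat) \<ge> 1 \<Longrightarrow> (\<Sum>j<r. g j) = g 0 + (\<Sum>j=1..r-1. g j)"
proof -
  assume "r \<ge> 1"
  then obtain r' where r': "r = Suc r'" by (cases r) auto
  show ?thesis unfolding r' sum.lessThan_Suc_shift sum_bounds_lt_plus1 by simp
qed

lemma partI:
  fixes p m r :: nat assumes p: "p \<ge> 1" and m: "m \<ge> 1" and r: "r \<ge> 1"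
  shows "S_sum (int p) m 1 r =
              (\<Sum>i=2..m. (-1) ^ (m - i) / real r ^ (m - i + 1) * S_pp p i)
              + (-1) ^ (m - 1) / real r ^ m * zeta_nat (p + 1)
              + (-1) ^ (m - 1) / real r ^ m *
                  ((\<Sum>j=1..r-1. (-1) ^ (p + 1) * gharm 1 j / real j ^ p)
                   + (\<Sum>l=2..p. (-1) ^ (p - l) * gharm (int (p - l + 1)) (r - 1) * zeta_nat l))"
proof -
  define a where "a n = gharm (int p) (Suc n)" for n
  define V where "V = (\<Sum>j<r. suminf (\<lambda>k. 1/(real (Suc k)^p * real (Suc k + j))))"
  have kV: "(\<lambda>n. a n * (1/real (Suc n) - 1/real (Suc n + r))) sums V"
    unfolding a_def V_def by (rule key[OF p r])
  have "(\<lambda>n. a n / (real (Suc n) ^ m * real (Suc n + r))) sums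
    ((\<Sum>i=2..m. (-1)^(m-i) / real r^(m-i+1) * suminf (\<lambda>n. a n / real (Suc n) ^ i))
     + (-1)^(m-1)/real r^m * suminf (\<lambda>n. a n * (1 / real (Suc n) - 1 / real (Suc n + r))))"
    using kV Hsummable[OF p] by (intro series_pf m r) (auto simp: a_def intro: sums_summable)
  hence S1: "S_sum (int p) m 1 r = (\<Sum>i=2..m. (-1)^(m-i) / real r^(m-i+1) * S_pp p i) + (-1)^(m-1)/real r^m * V"
    using kV unfolding S_sum_def S_pp_def a_def by (simp add: sums_iff)
  have g0: "suminf (\<lambda>k. 1/(real (Suc k)^p * real (Suc k + 0))) = zeta_nat (p+1)"
    unfolding zeta_nat_def by (simp add: mult.commute)
  have gj: "suminf (\<lambda>k. 1/(real (Suc k)^p * real (Suc k + j))) =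
     (\<Sum>i=2..p. (-1)^(p-i)/real j^(p-i+1) * zeta_nat i) + (-1)^(p-1)/real j^p * gharm 1 j"
    if "j \<in> {1..r-1}" for j
    using seriesB[OF p, of j] that by (simp add: sums_iff)
  have sgn: "(-1::real)^(p-1) = (-1)^(p+1)"
    using p by (cases p) simp_all
  have "V = zeta_nat (p+1) + (\<Sum>j=1..r-1. (\<Sum>i=2..p. (-1)^(p-i)/real j^(p-i+1) * zeta_nat i) + (-1)^(p-1)/real j^p * gharm 1 j)"
    unfolding V_def sum_split0[OF r] g0 using gj by simp
  also have "\<dots> = zeta_nat (p+1) + ((\<Sum>j=1..r-1. (-1) ^ (p + 1) * gharm 1 j / real j ^ p)
                   + (\<Sum>l=2..p. (-1) ^ (p - l) * gharm (int (p - l + 1)) (r - 1) * zeta_nat l))"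
    unfolding sum.distrib gharm_pos sgn
    by (simp add: sum_distrib_left sum_distrib_right mult_ac add.commute) (rule sum.swap)
  finally show ?thesis unfolding S1 by (simp add: algebra_simps)
qed


lemma partII:
  fixes p m r :: nat assumes m: "m \<ge> 1" and r: "r \<ge> 1" and mp: "m \<ge> p + 2"
  shows "S_sum (- int p) m 1 r =
              1 / real (p + 1) * (\<Sum>l=0..p. real ((p + 1) choose l) * bernoulli_plus l *
                ((\<Sum>i=2..m - p - 1 + l. (-1) ^ (m - p - 1 + l - i) / real r ^ (m - p + l - i) * zeta_nat i)
                 + (-1) ^ (m - p - 2 + l) / real r ^ (m - p - 1 + l) * gharm 1 r))"
proof -
  define c where "c l = real ((p + 1) choose l) * bernoulli_plus l" for l
  define T where "T k = (\<Sum>i=2..k. (-1)^(k-i)/real r^(k-i+1) * zeta_nat i) + (-1)^(k-1)/real r^k * gharm 1 r" for k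
  have tm: "gharm (- int p) (Suc n) / (real (Suc n) ^ m * real (Suc n + r) ^ 1) =
     1 / real (p + 1) * (\<Sum>l=0..p. c l * (1/(real (Suc n)^(m-p-1+l) * real (Suc n + r))))" for n
  proof -
    define x where "x = real (Suc n)"
    define y where "y = real (Suc n + r)"
    have x: "x > 0" and y: "y > 0" unfolding x_def y_def by auto
    have e: "x ^ (p + 1 - l) / (x ^ m * y) = 1/(x^(m-p-1+l) * y)" if "l \<in> {0..p}" for l
    proof -
      have "m = (m-p-1+l) + (p+1-l)" using that mp by auto
      hence "x ^ m = x^(m-p-1+l) * x^(p+1-l)" by (metis power_add)
      thus ?thesis using x y by simp
    qed
    have "gharm (- int p) (Suc n) / (x ^ m * y) =
        1 / real (p + 1) * (\<Sum>l=0..p. c l * (x ^ (p + 1 - l) / (x ^ m * y)))"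
      unfolding gharm_neg faulhaber c_def x_def
      by (simp add: sum_divide_distrib sum_distrib_left mult_ac)
    also have "\<dots> = 1 / real (p + 1) * (\<Sum>l=0..p. c l * (1/(x^(m-p-1+l) * y)))"
      using e by simp
    finally show ?thesis unfolding x_def y_def by simp
  qed
  have "(\<lambda>n. 1 / real (p + 1) * (\<Sum>l=0..p. c l * (1/(real (Suc n)^(m-p-1+l) * real (Suc n + r)))))
     sums (1 / real (p + 1) * (\<Sum>l=0..p. c l * T (m-p-1+l)))"
    unfolding T_def using mp
    by (intro sums_mult sums_sum seriesB r) auto
  hence Sv: "S_sum (- int p) m 1 r = 1 / real (p + 1) * (\<Sum>l=0..p. c l * T (m-p-1+l))"
    unfolding S_sum_def tm by (simp add: sums_iff)
  have Tl: "T (m-p-1+l) = (\<Sum>i=2..m - p - 1 + l. (-1) ^ (m - p - 1 + l - i) / real r ^ (m - p + l - i) * zeta_nat i)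
                 + (-1) ^ (m - p - 2 + l) / real r ^ (m - p - 1 + l) * gharm 1 r" for l
  proof -
    have "m - p - 1 + l - 1 = m - p - 2 + l" using mp by auto
    moreover have "m - p - 1 + l - i + 1 = m - p + l - i" if "i \<in> {2..m - p - 1 + l}" for i
      using that mp by auto
    ultimately show ?thesis unfolding T_def by (intro arg_cong2[where f="(+)"] sum.cong) auto
  qed
  show ?thesis unfolding Sv Tl c_def ..
qed

theorem lemma2:
  shows "(\<forall>p m r :: nat. p \<ge> 1 \<longrightarrow> m \<ge> 1 \<longrightarrow> r \<ge> 1 \<longrightarrow>
            S_sum (int p) m 1 r =
              (\<Sum>i=2..m. (-1) ^ (m - i) / real r ^ (m - i + 1) * S_pp p i)
              + (-1) ^ (m - 1) / real r ^ m * zeta_nat (p + 1)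
              + (-1) ^ (m - 1) / real r ^ m *
                  ((\<Sum>j=1..r-1. (-1) ^ (p + 1) * gharm 1 j / real j ^ p)
                   + (\<Sum>l=2..p. (-1) ^ (p - l) * gharm (int (p - l + 1)) (r - 1) * zeta_nat l)))
       \<and> (\<forall>p m r :: nat. m \<ge> 1 \<longrightarrow> r \<ge> 1 \<longrightarrow> m \<ge> p + 2 \<longrightarrow>
            S_sum (- int p) m 1 r =
              1 / real (p + 1) * (\<Sum>l=0..p. real ((p + 1) choose l) * bernoulli_plus l *
                ((\<Sum>i=2..m - p - 1 + l. (-1) ^ (m - p - 1 + l - i) / real r ^ (m - p + l - i) * zeta_nat i)
                 + (-1) ^ (m - p - 2 + l) / real r ^ (m - p - 1 + l) * gharm 1 r)))"
  using partI partII by blast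

end
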